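(* Let $\mathcal H$ be a separable complex Hilbert space and $S_2$ the Hilbert space of Hilbert–Schmidt operators on $\mathcal H$ with $\langle\eta,\tau\rangle_2=\operatorname{tr}(\eta^*\tau)$. Let $A$ be a non-zero operator in $\mathcal B(S_2)$ given by $A\eta=a\eta b$ with $a,b\in\mathcal B(\mathcal H)$. If $A\ge0$, then there exist $\hat a,\hat b\in\mathcal B(\mathcal H)$ with $\hat a,\hat b\ge0$ such that $A\eta=\hat a\eta\hat b$ for all $\eta\in S_2$. Moreover, $\hat a,\hat b$ are positive (resp. positive definite) if $A$ is positive (resp. positive definite).
   Context: For a bounded operator $T$ on a Hilbert space: $T\ge0$ if $\langle x,Tx\rangle\ge0$ for all $x$; $T$ positive if $\langle x,Tx\rangle>0$ for all $x\ne0$; positive definite if $\inf\{\langle x,Tx\rangle:\|x\|=1\}>0$. Inner products are anti-linear in the left argument. *)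

theory Defs
  imports "HOL-Analysis.Analysis" "HOL-Library.Complex_Order"
begin

text \<open>HOL-Analysis has only real inner product spaces, so complex ones are introduced
  here as type classes. The inner product is anti-linear in the LEFT argument.\<close>

class complex_vector = real_vector +
  fixes scaleC :: "complex \<Rightarrow> 'a \<Rightarrow> 'a" (infixr \<open>*\<^sub>C\<close> 75)
  assumes scaleC_add_right: "c *\<^sub>C (x + y) = c *\<^sub>C x + c *\<^sub>C y"
    and scaleC_add_left: "(c + d) *\<^sub>C x = c *\<^sub>C x + d *\<^sub>C x"
    and scaleC_scaleC: "c *\<^sub>C (d *\<^sub>C x) = (c * d) *\<^sub>C x"
    and scaleC_one: "1 *\<^sub>C x = x"
    and scaleR_scaleC: "scaleR r x = complex_of_real r *\<^sub>C x"

class complex_inner = complex_vector + real_normed_vector +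
  fixes cinner :: "'a \<Rightarrow> 'a \<Rightarrow> complex"
  assumes cinner_commute: "cinner x y = cnj (cinner y x)"
    and cinner_add_left: "cinner (x + y) z = cinner x z + cinner y z"
    and cinner_scaleC_left: "cinner (c *\<^sub>C x) y = cnj c * cinner x y"
    and cinner_ge_zero: "0 \<le> cinner x x"
    and cinner_eq_zero_iff: "cinner x x = 0 \<longleftrightarrow> x = 0"
    and norm_eq_sqrt_cinner: "norm x = sqrt (Re (cinner x x))"

class chilbert_space = complex_inner + complete_space

definition separable_space :: "'a::topological_space itself \<Rightarrow> bool" where
  "separable_space _ \<longleftrightarrow> (\<exists>D::'a set. countable D \<and> closure D = UNIV)"

definition bounded_clinear :: "('a::complex_inner \<Rightarrow> 'b::complex_inner) \<Rightarrow> bool" where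
  "bounded_clinear f \<longleftrightarrow>
     (\<forall>x y. f (x + y) = f x + f y) \<and> (\<forall>c x. f (c *\<^sub>C x) = c *\<^sub>C f x) \<and>
     (\<exists>K. \<forall>x. norm (f x) \<le> norm x * K)"

text \<open>T \<ge> 0, T positive, T positive definite (order on complex from Complex_Order:
  z \<ge> 0 iff z is real and nonnegative).\<close>
definition op_nonneg :: "('a::complex_inner \<Rightarrow> 'a) \<Rightarrow> bool" where
  "op_nonneg T \<longleftrightarrow> (\<forall>x. 0 \<le> cinner x (T x))"

definition op_pos :: "('a::complex_inner \<Rightarrow> 'a) \<Rightarrow> bool" where
  "op_pos T \<longleftrightarrow> (\<forall>x. x \<noteq> 0 \<longrightarrow> 0 < cinner x (T x))"

definition op_posdef :: "('a::complex_inner \<Rightarrow> 'a) \<Rightarrow> bool" where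
  "op_posdef T \<longleftrightarrow> (\<exists>c>0. \<forall>x. norm x = 1 \<longrightarrow> complex_of_real c \<le> cinner x (T x))"

definition cspan :: "'a::complex_vector set \<Rightarrow> 'a set" where
  "cspan E = {x. \<exists>F c. finite F \<and> F \<subseteq> E \<and> x = (\<Sum>e\<in>F. c e *\<^sub>C e)}"

definition is_onb :: "'a::complex_inner set \<Rightarrow> bool" where
  "is_onb E \<longleftrightarrow> (\<forall>e\<in>E. cinner e e = 1) \<and> (\<forall>e\<in>E. \<forall>f\<in>E. e \<noteq> f \<longrightarrow> cinner e f = 0)
     \<and> closure (cspan E) = UNIV"

definition hilbert_schmidt :: "('a::chilbert_space \<Rightarrow> 'a) \<Rightarrow> bool" where
  "hilbert_schmidt T \<longleftrightarrow> bounded_clinear T \<and>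
     (\<exists>E. is_onb E \<and> (\<lambda>e. (norm (T e))\<^sup>2) summable_on E)"

text \<open>The Hilbert--Schmidt inner product tr(eta^* tau) = sum over an orthonormal basis of
  the inner products of eta e and tau e (basis independent; a fixed basis is chosen).\<close>
definition hs_inner :: "('a::chilbert_space \<Rightarrow> 'a) \<Rightarrow> ('a \<Rightarrow> 'a) \<Rightarrow> complex" where
  "hs_inner \<eta> \<tau> = infsum (\<lambda>e. cinner (\<eta> e) (\<tau> e)) (SOME E. is_onb E)"

definition hs_norm :: "('a::chilbert_space \<Rightarrow> 'a) \<Rightarrow> real" where
  "hs_norm \<eta> = sqrt (Re (hs_inner \<eta> \<eta>))"

definition hs_op_nonneg :: "(('a::chilbert_space \<Rightarrow> 'a) \<Rightarrow> ('a \<Rightarrow> 'a)) \<Rightarrow> bool" where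
  "hs_op_nonneg A \<longleftrightarrow> (\<forall>\<eta>. hilbert_schmidt \<eta> \<longrightarrow> 0 \<le> hs_inner \<eta> (A \<eta>))"

definition hs_op_pos :: "(('a::chilbert_space \<Rightarrow> 'a) \<Rightarrow> ('a \<Rightarrow> 'a)) \<Rightarrow> bool" where
  "hs_op_pos A \<longleftrightarrow> (\<forall>\<eta>. hilbert_schmidt \<eta> \<and> \<eta> \<noteq> (\<lambda>_. 0) \<longrightarrow> 0 < hs_inner \<eta> (A \<eta>))"

definition hs_op_posdef :: "(('a::chilbert_space \<Rightarrow> 'a) \<Rightarrow> ('a \<Rightarrow> 'a)) \<Rightarrow> bool" where
  "hs_op_posdef A \<longleftrightarrow> (\<exists>c>0. \<forall>\<eta>. hilbert_schmidt \<eta> \<and> hs_norm \<eta> = 1 \<longrightarrow>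
                          complex_of_real c \<le> hs_inner \<eta> (A \<eta>))"

end

theory Submission
  imports Defs
begin


lemma cinner_add_right: "cinner x (y + z) = cinner x y + cinner x z"
  by (metis cinner_commute cinner_add_left complex_cnj_add)
lemma cinner_scaleC_right: "cinner x (c *\<^sub>C y) = c * cinner x y"
  by (metis cinner_commute cinner_scaleC_left complex_cnj_cnj complex_cnj_mult)
lemma cinner_zero_left[simp]: "cinner 0 x = 0"
  using cinner_add_left[of 0 0 x] by simp
lemma cinner_zero_right[simp]: "cinner x 0 = 0"
  using cinner_add_right[of x 0 0] by simp
lemma cinner_minus_left: "cinner (- x) y = - cinner x y"
  by (metis cinner_add_left[of "-x" x y] add.left_inverse cinner_zero_left eq_neg_iff_add_eq_0)
lemma cinner_minus_right: "cinner x (- y) = - cinner x y"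
  by (metis cinner_add_right[of x "-y" y] add.left_inverse cinner_zero_right eq_neg_iff_add_eq_0)
lemma cinner_diff_left: "cinner (x - y) z = cinner x z - cinner y z"
  by (simp add: cinner_add_left cinner_minus_left diff_conv_add_uminus del: add_uminus_conv_diff)
lemma cinner_diff_right: "cinner x (y - z) = cinner x y - cinner x z"
  by (simp add: cinner_add_right cinner_minus_right diff_conv_add_uminus del: add_uminus_conv_diff)
lemma cinner_sum_left: "cinner (\<Sum>i\<in>F. f i) y = (\<Sum>i\<in>F. cinner (f i) y)"
  by (induction F rule: infinite_finite_induct) (auto simp: cinner_add_left)
lemma cinner_sum_right: "cinner y (\<Sum>i\<in>F. f i) = (\<Sum>i\<in>F. cinner y (f i))"
  by (induction F rule: infinite_finite_induct) (auto simp: cinner_add_right)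

lemma cinner_self: "cinner x x = complex_of_real ((norm x)\<^sup>2)"
proof -
  have "0 \<le> cinner x x" by (rule cinner_ge_zero)
  then have "Im (cinner x x) = 0" "Re (cinner x x) \<ge> 0" by (auto simp: less_eq_complex_def)
  moreover have "(norm x)\<^sup>2 = Re (cinner x x)" using norm_eq_sqrt_cinner[of x] calculation by simp
  ultimately show ?thesis by (simp add: complex_eq_iff)
qed

lemma scaleC_zero_right[simp]: "c *\<^sub>C (0::'a::complex_vector) = 0"
  using scaleC_add_right[of c 0 0] by simp
lemma scaleC_zero_left[simp]: "0 *\<^sub>C (x::'a::complex_vector) = 0"
  using scaleC_add_left[of 0 0 x] by simp
lemma scaleC_minus_right: "c *\<^sub>C (- x::'a::complex_vector) = - (c *\<^sub>C x)"
  by (metis scaleC_add_right[of c "-x" x] add.left_inverse scaleC_zero_right eq_neg_iff_add_eq_0)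
lemma scaleC_diff_right: "c *\<^sub>C (x - y::'a::complex_vector) = c *\<^sub>C x - c *\<^sub>C y"
  by (simp add: scaleC_add_right scaleC_minus_right diff_conv_add_uminus del: add_uminus_conv_diff)
lemma scaleC_minus_left: "(- c) *\<^sub>C (x::'a::complex_vector) = - (c *\<^sub>C x)"
  by (metis scaleC_add_left[of "-c" c x] add.left_inverse scaleC_zero_left eq_neg_iff_add_eq_0)
lemma scaleC_diff_left: "(c - d) *\<^sub>C (x::'a::complex_vector) = c *\<^sub>C x - d *\<^sub>C x"
  by (simp add: scaleC_add_left scaleC_minus_left diff_conv_add_uminus del: add_uminus_conv_diff)
lemma scaleC_sum_right: "c *\<^sub>C (\<Sum>i\<in>F. f i) = (\<Sum>i\<in>F. c *\<^sub>C (f i::'a::complex_vector))"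
  by (induction F rule: infinite_finite_induct) (auto simp: scaleC_add_right)

lemma norm_scaleC_sq: "(norm (c *\<^sub>C (x::'a::complex_inner)))\<^sup>2 = (cmod c)\<^sup>2 * (norm x)\<^sup>2"
proof -
  have "complex_of_real ((norm (c *\<^sub>C x))\<^sup>2) = cinner (c *\<^sub>C x) (c *\<^sub>C x)"
    by (simp only: cinner_self)
  also have "\<dots> = cnj c * c * cinner x x" by (simp add: cinner_scaleC_left cinner_scaleC_right)
  also have "cinner x x = complex_of_real ((norm x)\<^sup>2)" by (rule cinner_self)
  also have "cnj c * c = complex_of_real ((cmod c)\<^sup>2)" by (metis complex_norm_square mult.commute)
  finally show ?thesis by (metis of_real_eq_iff of_real_mult)
qed
lemma norm_scaleC: "norm (c *\<^sub>C (x::'a::complex_inner)) = cmod c * norm x"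
  using norm_scaleC_sq[of c x] by (metis norm_ge_zero power_mult_distrib power2_eq_imp_eq mult_nonneg_nonneg)

lemma cauchy_schwarz_sq: "(cmod (cinner x y))\<^sup>2 \<le> (norm x)\<^sup>2 * (norm y)\<^sup>2"
proof (cases "y = 0")
  case True then show ?thesis by simp
next
  case False
  define N where "N = (norm y)\<^sup>2"
  have N: "N > 0" using False by (simp add: N_def)
  define t where "t = cinner y x / complex_of_real N"
  have "0 \<le> Re (cinner (x - t *\<^sub>C y) (x - t *\<^sub>C y))"
    using cinner_ge_zero by (auto simp: less_eq_complex_def)
  also have "cinner (x - t *\<^sub>C y) (x - t *\<^sub>C y) =
     cinner x x - t * cinner x y - cnj t * cinner y x + cnj t * t * cinner y y"
    by (simp add: cinner_diff_left cinner_diff_right cinner_scaleC_left cinner_scaleC_right algebra_simps)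
  also have "cinner y y = complex_of_real N" by (simp add: cinner_self N_def)
  also have "cnj t * t * complex_of_real N = cnj t * cinner y x"
    using N by (simp add: t_def)
  also have "t * cinner x y = complex_of_real ((cmod (cinner x y))\<^sup>2 / N)"
    using N by (simp add: t_def complex_norm_square) (metis cinner_commute mult.commute complex_mult_cnj  of_real_power complex_norm_square)
  finally have "(cmod (cinner x y))\<^sup>2 / N \<le> (norm x)\<^sup>2" by (simp add: cinner_self)
  then show ?thesis using N by (simp add: N_def field_simps)
qed

lemma cauchy_schwarz: "cmod (cinner x y) \<le> norm x * norm y"
  using cauchy_schwarz_sq[of x y]
  by (metis norm_ge_zero mult_nonneg_nonneg power_mult_distrib power2_le_imp_le)




lemma norm_sq_cinner: "(norm x)\<^sup>2 = Re (cinner x x)"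
  by (simp add: cinner_self)

lemma onb_ortho:
  assumes "is_onb E"
  shows "e \<in> E \<Longrightarrow> f \<in> E \<Longrightarrow> cinner e f = (if e = f then 1 else 0)"
  using assms unfolding is_onb_def by metis

lemma onb_proj_orth:
  assumes onb: "is_onb E" and F: "finite F" "F \<subseteq> E" and f: "f \<in> F"
  shows "cinner f (y - (\<Sum>e\<in>F. cinner e y *\<^sub>C e)) = 0"
proof -
  have "cinner f (\<Sum>e\<in>F. cinner e y *\<^sub>C e) = (\<Sum>e\<in>F. cinner e y * cinner f e)"
    by (simp add: cinner_sum_right cinner_scaleC_right)
  also have "\<dots> = (\<Sum>e\<in>F. if e = f then cinner f y else 0)"
  proof (rule sum.cong)
    fix e assume "e \<in> F"
    then have "e \<in> E" "f \<in> E" using F f by auto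
    then show "cinner e y * cinner f e = (if e = f then cinner f y else 0)"
      by (cases "e = f") (simp_all add: onb_ortho[OF onb])
  qed simp
  also have "\<dots> = cinner f y" using F f by simp
  finally show ?thesis by (simp add: cinner_diff_right)
qed

lemma onb_best_approx:
  assumes onb: "is_onb E" and F: "finite F" "F \<subseteq> E"
  shows "norm (y - (\<Sum>e\<in>F. cinner e y *\<^sub>C e)) \<le> norm (y - (\<Sum>e\<in>F. d e *\<^sub>C e))"
proof -
  define r where "r = y - (\<Sum>e\<in>F. cinner e y *\<^sub>C e)"
  define D where "D = (\<Sum>e\<in>F. (cinner e y - d e) *\<^sub>C e)"
  have orth: "cinner f r = 0" if "f \<in> F" for f
    using onb_proj_orth[OF onb F that] by (simp add: r_def)
  have Dr: "cinner D r = 0"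
    by (simp add: D_def cinner_sum_left cinner_scaleC_left orth)
  have rD: "cinner r D = 0" using Dr cinner_commute[of r D] by simp
  have eq: "y - (\<Sum>e\<in>F. d e *\<^sub>C e) = r + D"
    by (simp add: r_def D_def scaleC_diff_left sum_subtractf)
  have "(norm (r + D))\<^sup>2 = (norm r)\<^sup>2 + (norm D)\<^sup>2"
    by (simp add: norm_sq_cinner cinner_add_left cinner_add_right Dr rD)
  then have "(norm r)\<^sup>2 \<le> (norm (r + D))\<^sup>2" by simp
  then have "norm r \<le> norm (r + D)" by (rule power2_le_imp_le) simp
  then show ?thesis by (simp add: eq r_def)
qed

lemma onb_expansion:
  assumes onb: "is_onb E"
  shows "((\<lambda>e. cinner e y *\<^sub>C e) has_sum y) E"
  unfolding has_sum_def tendsto_iff eventually_finite_subsets_at_top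
proof (intro allI impI)
  fix \<epsilon> :: real assume "\<epsilon> > 0"
  have "y \<in> closure (cspan E)" using onb unfolding is_onb_def by auto
  then obtain w where w: "w \<in> cspan E" "dist w y < \<epsilon>"
    using \<open>\<epsilon> > 0\<close> unfolding closure_approachable by blast
  then obtain G c where G: "finite G" "G \<subseteq> E" "w = (\<Sum>e\<in>G. c e *\<^sub>C e)"
    unfolding cspan_def by blast
  show "\<exists>X. finite X \<and> X \<subseteq> E \<and> (\<forall>Y. finite Y \<and> X \<subseteq> Y \<and> Y \<subseteq> E \<longrightarrow>
           dist (\<Sum>e\<in>Y. cinner e y *\<^sub>C e) y < \<epsilon>)"
  proof (intro exI conjI allI impI)
    fix Y assume Y: "finite Y \<and> G \<subseteq> Y \<and> Y \<subseteq> E"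
    have wY: "w = (\<Sum>e\<in>Y. (if e \<in> G then c e else 0) *\<^sub>C e)"
      unfolding G(3) by (rule sum.mono_neutral_cong_right[symmetric]) (use Y in auto)
    have "dist (\<Sum>e\<in>Y. cinner e y *\<^sub>C e) y = norm (y - (\<Sum>e\<in>Y. cinner e y *\<^sub>C e))"
      by (simp add: dist_norm norm_minus_commute)
    also have "\<dots> \<le> norm (y - w)"
      unfolding wY using onb Y by (intro onb_best_approx) auto
    also have "\<dots> < \<epsilon>" using w by (simp add: dist_norm norm_minus_commute)
    finally show "dist (\<Sum>e\<in>Y. cinner e y *\<^sub>C e) y < \<epsilon>" .
  qed (use G in auto)
qed



lemma bcl_add: "bounded_clinear f \<Longrightarrow> f (x + y) = f x + f y"
  unfolding bounded_clinear_def by blast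
lemma bcl_scale: "bounded_clinear f \<Longrightarrow> f (c *\<^sub>C x) = c *\<^sub>C f x"
  unfolding bounded_clinear_def by blast
lemma bcl_bound: "bounded_clinear f \<Longrightarrow> \<exists>K. \<forall>x. norm (f x) \<le> norm x * K"
  unfolding bounded_clinear_def by blast
lemma bcl_zero: "bounded_clinear f \<Longrightarrow> f 0 = 0"
  using bcl_add[of f 0 0] by simp
lemma bcl_id: "bounded_clinear (\<lambda>x. x)"
  unfolding bounded_clinear_def by (auto intro: exI[of _ 1])

definition r1 :: "'a::complex_inner \<Rightarrow> 'a \<Rightarrow> 'a \<Rightarrow> 'a" where
  "r1 x y = (\<lambda>z. cinner y z *\<^sub>C x)"

lemma bcl_r1: "bounded_clinear (r1 x y)"
  unfolding bounded_clinear_def r1_def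
proof (intro conjI allI exI)
  show "cinner y (u + v) *\<^sub>C x = cinner y u *\<^sub>C x + cinner y v *\<^sub>C x" for u v
    by (simp add: cinner_add_right scaleC_add_left)
  show "cinner y (c *\<^sub>C u) *\<^sub>C x = c *\<^sub>C cinner y u *\<^sub>C x" for c u
    by (simp add: cinner_scaleC_right scaleC_scaleC)
  show "norm (cinner y u *\<^sub>C x) \<le> norm u * (norm y * norm x)" for u
    using mult_left_mono[OF cauchy_schwarz[of y u] norm_ge_zero[of x]] by (simp add: norm_scaleC algebra_simps)
qed

lemma hs_sum_r1:
  assumes onb: "is_onb E" and ba: "bounded_clinear a" and bb: "bounded_clinear b"
  shows "((\<lambda>e. cinner (r1 x y e) (a (r1 x y (b e)))) has_sum (cinner x (a x) * cinner y (b y))) E"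
proof -
  define h where "h = (\<lambda>z. cinner y (b z) * cinner x (a x))"
  obtain K where K: "\<And>z. norm (b z) \<le> norm z * K" using bcl_bound[OF bb] by blast
  have hlin: "bounded_linear h"
  proof (rule bounded_linear_intro[where K = "norm y * cmod (cinner x (a x)) * K"])
    show "h (u + v) = h u + h v" for u v
      by (simp add: h_def bcl_add[OF bb] cinner_add_right algebra_simps)
    show "h (r *\<^sub>R u) = r *\<^sub>R h u" for r u
      by (simp add: h_def scaleR_scaleC bcl_scale[OF bb] cinner_scaleC_right scaleR_conv_of_real)
    show "norm (h u) \<le> norm u * (norm y * cmod (cinner x (a x)) * K)" for u
    proof -
      have "norm (h u) = cmod (cinner y (b u)) * cmod (cinner x (a x))" by (simp add: h_def norm_mult)
      also have "\<dots> \<le> (norm y * norm (b u)) * cmod (cinner x (a x))"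
        by (intro mult_right_mono cauchy_schwarz) simp
      also have "\<dots> \<le> (norm y * (norm u * K)) * cmod (cinner x (a x))"
        by (intro mult_right_mono mult_left_mono K) simp_all
      finally show ?thesis by (simp add: algebra_simps)
    qed
  qed
  have "((\<lambda>e. h (cinner e y *\<^sub>C e)) has_sum h y) E"
    by (rule has_sum_bounded_linear[OF hlin onb_expansion[OF onb]])
  moreover have "h (cinner e y *\<^sub>C e) = cinner (r1 x y e) (a (r1 x y (b e)))" for e
  proof -
    have "cinner (r1 x y e) (a (r1 x y (b e))) = cnj (cinner y e) * (cinner y (b e) * cinner x (a x))"
      by (simp add: r1_def bcl_scale[OF ba] cinner_scaleC_left cinner_scaleC_right)
    also have "cnj (cinner y e) = cinner e y" by (metis cinner_commute)
    finally show ?thesis by (simp add: h_def bcl_scale[OF bb] cinner_scaleC_right)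
  qed
  ultimately show ?thesis by (simp add: h_def mult.commute)
qed

lemma hs_inner_r1:
  fixes x y :: "'a::chilbert_space"
  assumes onb: "\<exists>E::'a set. is_onb E" and ba: "bounded_clinear a" and bb: "bounded_clinear b"
  shows "hs_inner (r1 x y) (\<lambda>z. a (r1 x y (b z))) = cinner x (a x) * cinner y (b y)"
proof -
  have "is_onb (SOME E::'a set. is_onb E)" using onb by (rule someI_ex)
  then show ?thesis unfolding hs_inner_def by (rule infsumI[OF hs_sum_r1[OF _ ba bb]])
qed

lemma hilbert_schmidt_r1:
  fixes x y :: "'a::chilbert_space"
  assumes onb: "is_onb (E::'a set)"
  shows "hilbert_schmidt (r1 x y)"
proof -
  have "((\<lambda>e. cinner (r1 x y e) (r1 x y e)) has_sum (cinner x x * cinner y y)) E"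
    using hs_sum_r1[OF onb bcl_id bcl_id] by simp
  from has_sum_bounded_linear[OF bounded_linear_Re this]
  have "((\<lambda>e. (norm (r1 x y e))\<^sup>2) has_sum Re (cinner x x * cinner y y)) E"
    by (simp add: cinner_self del: of_real_power)
  then have "(\<lambda>e. (norm (r1 x y e))\<^sup>2) summable_on E" by (auto simp: summable_on_def)
  then show ?thesis unfolding hilbert_schmidt_def using bcl_r1 onb by blast
qed

lemma quad_zero:
  assumes ba: "bounded_clinear a" and z: "\<And>x. cinner x (a x) = 0"
  shows "a w = 0"
proof -
  have pol: "cinner x (a y) + cinner y (a x) = 0" for x y
  proof -
    have "cinner (x + y) (a (x + y)) = 0" by (rule z)
    then show ?thesis by (simp add: bcl_add[OF ba] cinner_add_left cinner_add_right z algebra_simps)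
  qed
  have "cinner x (a y) = 0" for x y
  proof -
    have "cinner x (a (\<i> *\<^sub>C y)) + cinner (\<i> *\<^sub>C y) (a x) = 0" by (rule pol)
    then have "\<i> * cinner x (a y) - \<i> * cinner y (a x) = 0"
      by (simp add: bcl_scale[OF ba] cinner_scaleC_left cinner_scaleC_right)
    then have "cinner x (a y) - cinner y (a x) = 0"
      by (metis complex_i_not_zero mult_eq_0_iff right_diff_distrib)
    with pol[of x y] show ?thesis by (simp add: algebra_simps)
  qed
  then have "cinner (a w) (a w) = 0" by blast
  then show ?thesis by (simp add: cinner_eq_zero_iff)
qed



lemma cpos_cancel:
  fixes z p :: complex
  assumes "0 \<le> p" "p \<noteq> 0" "0 \<le> z * p"
  shows "0 \<le> z"
proof -
  have ip: "Im p = 0" "Re p \<ge> 0" using assms(1) by (simp_all add: less_eq_complex_def)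
  have "Re p \<noteq> 0" using assms(2) ip by (simp add: complex_eq_iff)
  with ip have rp: "Re p > 0" by linarith
  have "Im (z * p) = 0" "Re (z * p) \<ge> 0" using assms(3) by (simp_all add: less_eq_complex_def)
  then have "Im z * Re p = 0" "Re z * Re p \<ge> 0" using ip by simp_all
  then have "Im z = 0" "Re z \<ge> 0" using rp by (simp_all add: zero_le_mult_iff)
  then show ?thesis by (simp add: less_eq_complex_def)
qed

lemma cpos_strict:
  fixes z :: complex
  assumes "0 \<le> z" "z \<noteq> 0" shows "0 < z"
  using assms by (simp add: order_le_neq_trans)

lemma posdef_aux:
  fixes z p :: complex
  assumes "0 \<le> p" "0 \<le> z" "complex_of_real k \<le> z * p" "k > 0"
  shows "Re p > 0 \<and> complex_of_real (k / Re p) \<le> z"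
proof -
  have ip: "Im p = 0" "Re p \<ge> 0" using assms(1) by (simp_all add: less_eq_complex_def)
  have iz: "Im z = 0" "Re z \<ge> 0" using assms(2) by (simp_all add: less_eq_complex_def)
  have "k \<le> Re (z * p)" using assms(3) by (simp add: less_eq_complex_def)
  then have kk: "k \<le> Re z * Re p" using ip iz by simp
  have rp: "Re p > 0"
  proof (rule ccontr)
    assume "\<not> Re p > 0"
    then have "Re p = 0" using ip by linarith
    then show False using kk assms(4) by simp
  qed
  have "k / Re p \<le> Re z" using kk rp by (simp add: divide_le_eq)
  then show ?thesis using iz rp by (simp add: less_eq_complex_def)
qed

lemma bcl_scaled: "bounded_clinear f \<Longrightarrow> bounded_clinear (\<lambda>z. k *\<^sub>C f z)"
proof -
  assume f: "bounded_clinear f"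
  obtain K where K: "\<And>x. norm (f x) \<le> norm x * K" using bcl_bound[OF f] by blast
  show ?thesis unfolding bounded_clinear_def
  proof (intro conjI allI exI)
    show "k *\<^sub>C f (x + y) = k *\<^sub>C f x + k *\<^sub>C f y" for x y
      by (simp add: bcl_add[OF f] scaleC_add_right)
    show "k *\<^sub>C f (c *\<^sub>C x) = c *\<^sub>C k *\<^sub>C f x" for c x
      by (simp add: bcl_scale[OF f] scaleC_scaleC mult.commute)
    show "norm (k *\<^sub>C f x) \<le> norm x * (cmod k * K)" for x
      using mult_left_mono[OF K[of x] norm_ge_zero[of k]] by (simp add: norm_scaleC algebra_simps)
  qed
qed

lemma scaleC_eq_0D: "c *\<^sub>C (x::'a::complex_vector) = 0 \<Longrightarrow> c \<noteq> 0 \<Longrightarrow> x = 0"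
proof -
  assume c: "c *\<^sub>C x = 0" "c \<noteq> 0"
  have "x = (inverse c * c) *\<^sub>C x" using c(2) by (simp add: scaleC_one)
  also have "\<dots> = inverse c *\<^sub>C (c *\<^sub>C x)" by (rule scaleC_scaleC[symmetric])
  also have "\<dots> = 0" using c(1) by simp
  finally show ?thesis .
qed

theorem theorem3p11:
  fixes a b :: "'a::chilbert_space \<Rightarrow> 'a"
  assumes sep: "separable_space TYPE('a)"
    and ba: "bounded_clinear a" and bb: "bounded_clinear b"
    and nonzero: "\<exists>\<eta>. hilbert_schmidt \<eta> \<and> (\<lambda>x. a (\<eta> (b x))) \<noteq> (\<lambda>_. 0)"
    and Anonneg: "hs_op_nonneg (\<lambda>\<eta> x. a (\<eta> (b x)))"
  shows "\<exists>ah bh. bounded_clinear ah \<and> bounded_clinear bh \<and> op_nonneg ah \<and> op_nonneg bh \<and>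
           (\<forall>\<eta>. hilbert_schmidt \<eta> \<longrightarrow> (\<lambda>x. a (\<eta> (b x))) = (\<lambda>x. ah (\<eta> (bh x)))) \<and>
           (hs_op_pos (\<lambda>\<eta> x. a (\<eta> (b x))) \<longrightarrow> op_pos ah \<and> op_pos bh) \<and>
           (hs_op_posdef (\<lambda>\<eta> x. a (\<eta> (b x))) \<longrightarrow> op_posdef ah \<and> op_posdef bh)"
proof -
  obtain \<eta>0 z0 where hs0: "hilbert_schmidt \<eta>0" and nz0: "a (\<eta>0 (b z0)) \<noteq> 0"
    using nonzero by fast
  obtain E :: "'a set" where onbE: "is_onb E" using hs0 unfolding hilbert_schmidt_def by blast
  then have onb: "\<exists>E::'a set. is_onb E" by blast
  define \<alpha> where "\<alpha> x = cinner x (a x)" for x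
  define \<beta> where "\<beta> y = cinner y (b y)" for y
  have key: "0 \<le> \<alpha> x * \<beta> y" for x y
  proof -
    have "hilbert_schmidt (r1 x y)" by (rule hilbert_schmidt_r1[OF onbE])
    then have "0 \<le> hs_inner (r1 x y) (\<lambda>z. a (r1 x y (b z)))"
      using Anonneg unfolding hs_op_nonneg_def by blast
    then show ?thesis using hs_inner_r1[OF onb ba bb] by (simp add: \<alpha>_def \<beta>_def)
  qed
  have hsr: "hs_inner (r1 x y) (\<lambda>z. a (r1 x y (b z))) = \<alpha> x * \<beta> y" for x y
    using hs_inner_r1[OF onb ba bb] by (simp add: \<alpha>_def \<beta>_def)
  obtain x0 where x0: "\<alpha> x0 \<noteq> 0"
  proof (cases "\<forall>x. \<alpha> x = 0")
    case True
    then have "a (\<eta>0 (b z0)) = 0" using quad_zero[OF ba] by (auto simp: \<alpha>_def)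
    with nz0 show ?thesis by blast
  qed blast
  obtain y0 where y0: "\<beta> y0 \<noteq> 0"
  proof (cases "\<forall>y. \<beta> y = 0")
    case True
    then have "b z0 = 0" using quad_zero[OF bb] by (auto simp: \<beta>_def)
    moreover have "bounded_clinear \<eta>0" using hs0 unfolding hilbert_schmidt_def by blast
    ultimately have "a (\<eta>0 (b z0)) = 0" using bcl_zero[OF ba] bcl_zero[of \<eta>0] by simp
    with nz0 show ?thesis by blast
  qed blast
  have x0nz: "x0 \<noteq> 0" using x0 by (auto simp: \<alpha>_def)
  have y0nz: "y0 \<noteq> 0" using y0 by (auto simp: \<beta>_def)
  define v where "v = \<beta> y0"
  define w where "w = \<alpha> x0"
  have vnz: "v \<noteq> 0" using y0 by (simp add: v_def)
  have wnz: "w \<noteq> 0" using x0 by (simp add: w_def)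
  define c where "c = v / complex_of_real (cmod v)"
  have cnz: "c \<noteq> 0" using vnz by (simp add: c_def)
  define ah where "ah = (\<lambda>z. c *\<^sub>C a z)"
  define bh where "bh = (\<lambda>z. inverse c *\<^sub>C b z)"
  have ah_q: "cinner x (ah x) = c * \<alpha> x" for x by (simp add: ah_def \<alpha>_def cinner_scaleC_right)
  have bh_q: "cinner y (bh y) = inverse c * \<beta> y" for y by (simp add: bh_def \<beta>_def cinner_scaleC_right)
  have prod: "cinner x (ah x) * cinner y (bh y) = \<alpha> x * \<beta> y" for x y
    using cnz by (simp add: ah_q bh_q)
  have ah_nn: "0 \<le> cinner x (ah x)" for x
  proof (rule cpos_cancel)
    show "0 \<le> complex_of_real (cmod v)" by (simp add: less_eq_complex_def)
    show "complex_of_real (cmod v) \<noteq> 0" using vnz by simp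
    have "cinner x (ah x) * complex_of_real (cmod v) = \<alpha> x * \<beta> y0"
      using vnz by (simp add: ah_q c_def v_def)
    then show "0 \<le> cinner x (ah x) * complex_of_real (cmod v)" using key by simp
  qed
  have bh_nn: "0 \<le> cinner y (bh y)" for y
  proof (rule cpos_cancel)
    show "0 \<le> w * v" using key[of x0 y0] by (simp add: w_def v_def)
    show "w * v \<noteq> 0" using vnz wnz by simp
    have "cinner y (bh y) * (w * v) = complex_of_real (cmod v) * (\<alpha> x0 * \<beta> y)"
      using vnz by (simp add: bh_q c_def w_def)
    moreover have "0 \<le> complex_of_real (cmod v)" by (simp add: less_eq_complex_def)
    then have "0 \<le> complex_of_real (cmod v) * (\<alpha> x0 * \<beta> y)"
      using key[of x0 y] by (rule mult_nonneg_nonneg)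
    ultimately show "0 \<le> cinner y (bh y) * (w * v)" by simp
  qed
  have bcl_ah: "bounded_clinear ah" unfolding ah_def by (rule bcl_scaled[OF ba])
  have bcl_bh: "bounded_clinear bh" unfolding bh_def by (rule bcl_scaled[OF bb])
  have eqA: "(\<lambda>x. a (\<eta> (b x))) = (\<lambda>x. ah (\<eta> (bh x)))" if "hilbert_schmidt \<eta>" for \<eta>
  proof -
    have e: "bounded_clinear \<eta>" using that unfolding hilbert_schmidt_def by blast
    show ?thesis
    proof
      fix x
      have "ah (\<eta> (bh x)) = c *\<^sub>C a (\<eta> (inverse c *\<^sub>C b x))" by (simp only: ah_def bh_def)
      also have "\<dots> = c *\<^sub>C (inverse c *\<^sub>C a (\<eta> (b x)))" by (simp only: bcl_scale[OF e] bcl_scale[OF ba])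
      also have "\<dots> = (c * inverse c) *\<^sub>C a (\<eta> (b x))" by (rule scaleC_scaleC)
      also have "\<dots> = a (\<eta> (b x))" using cnz by (simp add: scaleC_one)
      finally show "a (\<eta> (b x)) = ah (\<eta> (bh x))" by simp
    qed
  qed
  have pos: "op_pos ah \<and> op_pos bh" if P: "hs_op_pos (\<lambda>\<eta> x. a (\<eta> (b x)))"
  proof -
    have P': "0 < \<alpha> x * \<beta> y" if "x \<noteq> 0" "y \<noteq> 0" for x y
    proof -
      have "r1 x y y = cinner y y *\<^sub>C x" by (simp add: r1_def)
      moreover have "cinner y y \<noteq> 0" using that by (simp add: cinner_eq_zero_iff)
      ultimately have "r1 x y y \<noteq> 0" using that scaleC_eq_0D by metis
      then have "r1 x y \<noteq> (\<lambda>_. 0)" by metis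
      moreover have "hilbert_schmidt (r1 x y)" by (rule hilbert_schmidt_r1[OF onbE])
      ultimately have "0 < hs_inner (r1 x y) (\<lambda>z. a (r1 x y (b z)))"
        using P unfolding hs_op_pos_def by blast
      then show ?thesis by (simp add: hsr)
    qed
    show ?thesis unfolding op_pos_def
    proof (intro conjI allI impI)
      fix x :: 'a assume "x \<noteq> 0"
      then have "0 < cinner x (ah x) * cinner x0 (bh x0)" using P'[of x x0] x0nz prod by simp
      then have "cinner x (ah x) \<noteq> 0" by auto
      then show "0 < cinner x (ah x)" using ah_nn cpos_strict by blast
    next
      fix y :: 'a assume "y \<noteq> 0"
      then have "0 < cinner x0 (ah x0) * cinner y (bh y)" using P'[of x0 y] x0nz prod by simp
      then have "cinner y (bh y) \<noteq> 0" by auto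
      then show "0 < cinner y (bh y)" using bh_nn cpos_strict by blast
    qed
  qed
  have posdef: "op_posdef ah \<and> op_posdef bh" if P: "hs_op_posdef (\<lambda>\<eta> x. a (\<eta> (b x)))"
  proof -
    obtain k where k: "k > 0" and kP: "\<And>\<eta>. hilbert_schmidt \<eta> \<and> hs_norm \<eta> = 1 \<Longrightarrow>
        complex_of_real k \<le> hs_inner \<eta> (\<lambda>x. a (\<eta> (b x)))"
      using P unfolding hs_op_posdef_def by blast
    have P': "complex_of_real k \<le> \<alpha> x * \<beta> y" if "norm x = 1" "norm y = 1" for x y
    proof -
      have "hs_inner (r1 x y) (r1 x y) = cinner x x * cinner y y"
        using hs_inner_r1[OF onb bcl_id bcl_id, of x y] by simp
      then have "hs_norm (r1 x y) = 1" using that by (simp add: hs_norm_def cinner_self)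
      then show ?thesis using kP[of "r1 x y"] hilbert_schmidt_r1[OF onbE, of x y] hsr[of x y] by simp
    qed
    define u where "u = (1 / norm x0) *\<^sub>R x0"
    have u: "norm u = 1" using x0nz by (simp add: u_def)
    show ?thesis unfolding op_posdef_def
    proof (intro conjI)
      have L: "Re (cinner u (bh u)) > 0 \<and> complex_of_real (k / Re (cinner u (bh u))) \<le> cinner x (ah x)"
        if "norm x = 1" for x
        using posdef_aux[OF bh_nn ah_nn _ k] P'[OF that u] prod by simp
      then have "k / Re (cinner u (bh u)) > 0" using u k by simp
      then show "\<exists>c>0. \<forall>x. norm x = 1 \<longrightarrow> complex_of_real c \<le> cinner x (ah x)"
        using L by blast
    next
      have L: "Re (cinner u (ah u)) > 0 \<and> complex_of_real (k / Re (cinner u (ah u))) \<le> cinner y (bh y)"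
        if "norm y = 1" for y
        using posdef_aux[OF ah_nn bh_nn _ k] P'[OF u that] prod by (simp add: mult.commute)
      then have "k / Re (cinner u (ah u)) > 0" using u k by simp
      then show "\<exists>c>0. \<forall>x. norm x = 1 \<longrightarrow> complex_of_real c \<le> cinner x (bh x)"
        using L by blast
    qed
  qed
  have nn: "op_nonneg ah" "op_nonneg bh" unfolding op_nonneg_def using ah_nn bh_nn by auto
  have H: "bounded_clinear ah \<and> bounded_clinear bh \<and> op_nonneg ah \<and> op_nonneg bh \<and>
           (\<forall>\<eta>. hilbert_schmidt \<eta> \<longrightarrow> (\<lambda>x. a (\<eta> (b x))) = (\<lambda>x. ah (\<eta> (bh x)))) \<and>
           (hs_op_pos (\<lambda>\<eta> x. a (\<eta> (b x))) \<longrightarrow> op_pos ah \<and> op_pos bh) \<and>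
           (hs_op_posdef (\<lambda>\<eta> x. a (\<eta> (b x))) \<longrightarrow> op_posdef ah \<and> op_posdef bh)"
  proof (intro conjI allI impI bcl_ah bcl_bh nn)
    fix \<eta> :: "'a \<Rightarrow> 'a" assume "hilbert_schmidt \<eta>"
    then show "(\<lambda>x. a (\<eta> (b x))) = (\<lambda>x. ah (\<eta> (bh x)))" by (rule eqA)
  next
    assume "hs_op_pos (\<lambda>\<eta> x. a (\<eta> (b x)))"
    from pos[OF this] show "op_pos ah" by (rule conjunct1)
  next
    assume "hs_op_pos (\<lambda>\<eta> x. a (\<eta> (b x)))"
    from pos[OF this] show "op_pos bh" by (rule conjunct2)
  next
    assume "hs_op_posdef (\<lambda>\<eta> x. a (\<eta> (b x)))"
    from posdef[OF this] show "op_posdef ah" by (rule conjunct1)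
  next
    assume "hs_op_posdef (\<lambda>\<eta> x. a (\<eta> (b x)))"
    from posdef[OF this] show "op_posdef bh" by (rule conjunct2)
  qed
  show ?thesis by (rule exI, rule exI, rule H)
qed

end
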